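(* Let $K_1,K_2$ be simplicial complexes on $[m]$, $W=K_1\cap K_2$, $Z\subset W$ with $\varnothing\notin Z$ and $O_{K_1\cup K_2}(Z)\subset W$, and $K=K_1\#^ZK_2=\operatorname{Del}_Z(K_1\cup K_2)$. Let $\mathcal I_Z\subset\mathbb Z[K_1\cup K_2]$ be the ideal generated by $x_\sigma$, $\sigma\in Z$. Let $B$ be an integer $r\times m$ matrix of rank $r$, $u_i=\sum_jB_{ij}x_j$, $S=\mathbb Z[u_1,\dots,u_r]$, with $\mathbb Z$ an $S$-module via $u_i\mapsto0$. If $\operatorname{Tor}_1^S(\mathbb Z[K_1],\mathbb Z)=\operatorname{Tor}_1^S(\mathbb Z[K_2],\mathbb Z)=\operatorname{Tor}_1^S(\mathbb Z[K],\mathbb Z)=\operatorname{Tor}_1^S(\mathbb Z[W],\mathbb Z)=0$, then $$\operatorname{Tor}_0^S(\mathbb Z[K],\mathbb Z)\cong\operatorname{Tor}_0^S(\mathbb Z[K_1],\mathbb Z)\ \#^{\operatorname{Tor}_0^S(\mathcal I_Z,\mathbb Z)}_{\operatorname{Tor}_0^S(\mathbb Z[W],\mathbb Z)}\ \operatorname{Tor}_0^S(\mathbb Z[K_2],\mathbb Z),$$ where the maps $\operatorname{Tor}_0^S(\mathbb Z[K_i],\mathbb Z)\to\operatorname{Tor}_0^S(\mathbb Z[W],\mathbb Z)$ are induced by the natural quotient maps and $\operatorname{Tor}_0^S(\mathcal I_Z,\mathbb Z)\to\operatorname{Tor}_0^S(\mathbb Z[K_i],\mathbb Z)$ by $\mathcal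 I_Z\subset\mathbb Z[K_1\cup K_2]\to\mathbb Z[K_i]$.
   Context: $\mathbb Z[K]=\mathbb Z[x_1,\dots,x_m]/\langle x_\sigma:\sigma\notin K\rangle$ is the Stanley–Reisner ring, $x_\sigma=\prod_{i\in\sigma}x_i$. $O_K(Z)=\{\sigma\in K:\sigma\supseteq\tau$ for some $\tau\in Z\}$, $\operatorname{Del}_Z(K)=K\setminus O_K(Z)$. Connected sum of rings: given ring maps $\epsilon_A:A\to C$, $\epsilon_B:B\to C$, a $C$-module $V$ and module maps $\iota_A:V\to A$, $\iota_B:V\to B$ with $\epsilon_A\iota_A=\epsilon_B\iota_B$, $A\#_C^VB:=(A\times_CB)/\{(\iota_A(v),\iota_B(v)):v\in V\}$ with $A\times_CB=\{(a,b):\epsilon_A(a)=\epsilon_B(b)\}$. *)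

theory Defs
  imports "HOL-Algebra.QuotRing" "HOL-Library.Poly_Mapping" "HOL-Analysis.Cartesian_Space"
begin

section \<open>Polynomial ring Z[x_1,...,x_m]; the vertex set [m] is the finite type 'n\<close>

type_synonym 'n mpoly = "('n \<Rightarrow>\<^sub>0 nat) \<Rightarrow>\<^sub>0 int"

definition PR :: "'n mpoly ring" where
  "PR = \<lparr>carrier = UNIV, mult = (*), one = 1, zero = 0, add = (+)\<rparr>"

definition var :: "'n \<Rightarrow> 'n mpoly" where
  "var i = Poly_Mapping.single (Poly_Mapping.single i 1) 1"

definition xs :: "'n set \<Rightarrow> 'n mpoly" where
  "xs \<sigma> = (\<Prod>i\<in>\<sigma>. var i)"

definition simplicial_complex :: "'n set set \<Rightarrow> bool" where
  "simplicial_complex K \<longleftrightarrow> {} \<in> K \<and> (\<forall>\<sigma>\<in>K. \<forall>\<tau>. \<tau> \<subseteq> \<sigma> \<longrightarrow> \<tau> \<in> K)"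

definition open_star :: "'n set set \<Rightarrow> 'n set set \<Rightarrow> 'n set set" where
  "open_star K Z = {\<sigma>\<in>K. \<exists>\<tau>\<in>Z. \<tau> \<subseteq> \<sigma>}"

definition Del :: "'n set set \<Rightarrow> 'n set set \<Rightarrow> 'n set set" where
  "Del Z K = K - open_star K Z"

text \<open>Stanley--Reisner ideal: Z[K] = PR Quot SR_ideal K.\<close>
definition SR_ideal :: "'n set set \<Rightarrow> 'n mpoly set" where
  "SR_ideal K = genideal PR {xs \<sigma> | \<sigma>. \<sigma> \<notin> K}"

text \<open>Ideal of Z[x] generated by the x_sigma, sigma in Z; its image in Z[K1 u K2]
  is the ideal I_Z, represented as the subquotient (J_Z + I_{K1 u K2}) / I_{K1 u K2}.\<close>
definition face_ideal :: "'n set set \<Rightarrow> 'n mpoly set" where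
  "face_ideal Z = genideal PR {xs \<sigma> | \<sigma>. \<sigma> \<in> Z}"

definition setsum :: "'n mpoly set \<Rightarrow> 'n mpoly set \<Rightarrow> 'n mpoly set" where
  "setsum A B = {a + b | a b. a \<in> A \<and> b \<in> B}"

definition lin_form :: "int^'n^'r \<Rightarrow> 'r \<Rightarrow> 'n mpoly" where
  "lin_form B i = (\<Sum>j\<in>UNIV. of_int (B $ i $ j) * var j)"

definition u_mult :: "int^'n^'r \<Rightarrow> 'n mpoly set \<Rightarrow> 'n mpoly set" where
  "u_mult B N = {(\<Sum>i\<in>(UNIV::'r set). lin_form B i * n i) | n. \<forall>i. n i \<in> N}"

text \<open>An S-module M given as subquotient N1/N2 of P (N2 \<subseteq> N1 P-submodules).
  Tor_0^S(M,Z) = M / (u)M = N1 / (N2 + (u)N1); its elements are the cosets below.\<close>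
definition tor0_sub :: "int^'n^'r \<Rightarrow> 'n mpoly set \<Rightarrow> 'n mpoly set \<Rightarrow> 'n mpoly set" where
  "tor0_sub B N1 N2 = setsum N2 (u_mult B N1)"

definition tor0_set :: "int^'n^'r \<Rightarrow> 'n mpoly set \<Rightarrow> 'n mpoly set \<Rightarrow> 'n mpoly set set" where
  "tor0_set B N1 N2 = {tor0_sub B N1 N2 +>\<^bsub>PR\<^esub> n | n. n \<in> N1}"

text \<open>For the cyclic module Z[K] = P / I_K, Tor_0^S(Z[K],Z) = Z[K]/(u)Z[K] is a ring.\<close>
definition tor0_ring :: "int^'n^'r \<Rightarrow> 'n mpoly set \<Rightarrow> 'n mpoly set ring" where
  "tor0_ring B I = PR Quot (tor0_sub B UNIV I)"

text \<open>Tor_1^S(M,Z) = 0, computed with the Koszul resolution of Z over S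
  (a free resolution since the u_i have full rank): H_1 of K(u) \<otimes>_S M vanishes,
  i.e. every cycle (m_i) with sum u_i m_i = 0 in M is a Koszul boundary
  (sum_j u_j (a_ji - a_ij))_i.\<close>
definition tor1_zero :: "int^'n^'r \<Rightarrow> 'n mpoly set \<Rightarrow> 'n mpoly set \<Rightarrow> bool" where
  "tor1_zero B N1 N2 \<longleftrightarrow>
     (\<forall>m::'r \<Rightarrow> 'n mpoly. (\<forall>i. m i \<in> N1) \<and> (\<Sum>i\<in>UNIV. lin_form B i * m i) \<in> N2 \<longrightarrow>
        (\<exists>a::'r \<Rightarrow> 'r \<Rightarrow> 'n mpoly. (\<forall>j k. a j k \<in> N1) \<and>
           (\<forall>i. m i - (\<Sum>j\<in>UNIV. lin_form B j * (a j i - a i j)) \<in> N2)))"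

text \<open>Map between such quotients induced by the identity of P (natural quotient maps,
  and the inclusion I_Z into Z[K1 u K2] followed by the quotient to Z[K_i]).\<close>
definition induced :: "'n mpoly set \<Rightarrow> 'n mpoly set \<Rightarrow> 'n mpoly set" where
  "induced L X = L +>\<^bsub>PR\<^esub> (SOME p. p \<in> X)"

definition fiber_prod :: "('a,'c) ring_scheme \<Rightarrow> ('b,'d) ring_scheme \<Rightarrow> ('e,'f) ring_scheme
    \<Rightarrow> ('a \<Rightarrow> 'e) \<Rightarrow> ('b \<Rightarrow> 'e) \<Rightarrow> ('a \<times> 'b) ring" where
  "fiber_prod A B C eA eB =
     \<lparr>carrier = {(a, b). a \<in> carrier A \<and> b \<in> carrier B \<and> eA a = eB b},
      mult = (\<lambda>(a, b) (a', b'). (a \<otimes>\<^bsub>A\<^esub> a', b \<otimes>\<^bsub>B\<^esub> b')),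
      one = (\<one>\<^bsub>A\<^esub>, \<one>\<^bsub>B\<^esub>),
      zero = (\<zero>\<^bsub>A\<^esub>, \<zero>\<^bsub>B\<^esub>),
      add = (\<lambda>(a, b) (a', b'). (a \<oplus>\<^bsub>A\<^esub> a', b \<oplus>\<^bsub>B\<^esub> b'))\<rparr>"

definition conn_sum :: "('a,'c) ring_scheme \<Rightarrow> ('b,'d) ring_scheme \<Rightarrow> ('e,'f) ring_scheme
    \<Rightarrow> ('a \<Rightarrow> 'e) \<Rightarrow> ('b \<Rightarrow> 'e) \<Rightarrow> 'v set \<Rightarrow> ('v \<Rightarrow> 'a) \<Rightarrow> ('v \<Rightarrow> 'b) \<Rightarrow> ('a \<times> 'b) set ring" where
  "conn_sum A B C eA eB V iA iB = fiber_prod A B C eA eB Quot {(iA v, iB v) | v. v \<in> V}"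

end

theory Submission
  imports Defs
begin

lemma PR_simps[simp]: "carrier PR = UNIV" "mult PR = (*)" "one PR = 1" "zero PR = 0" "add PR = (+)"
  by (simp_all add: PR_def)
lemma cring_PR: "cring PR"
proof (rule cringI)
  show "abelian_group PR"
    by (rule abelian_groupI) (simp_all add: algebra_simps, metis add.right_inverse)
  show "comm_monoid PR"
    by (rule comm_monoidI) (simp_all add: algebra_simps)
  show "\<And>x y z. x \<in> carrier PR \<Longrightarrow> y \<in> carrier PR \<Longrightarrow> z \<in> carrier PR \<Longrightarrow>
      (x \<oplus>\<^bsub>PR\<^esub> y) \<otimes>\<^bsub>PR\<^esub> z = x \<otimes>\<^bsub>PR\<^esub> z \<oplus>\<^bsub>PR\<^esub> y \<otimes>\<^bsub>PR\<^esub> z"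
    by (simp add: algebra_simps)
qed
interpretation P: cring PR by (rule cring_PR)

lemma PR_ainv[simp]: "\<ominus>\<^bsub>PR\<^esub> x = - x"
  using P.add.inv_closed P.minus_unique P.r_neg
  by (metis P.add.inv_equality PR_simps(1,4,5) UNIV_I add.commute add.right_inverse)
lemma PR_minus[simp]: "x \<ominus>\<^bsub>PR\<^esub> y = x - y"
  by (simp add: a_minus_def)
lemma PR_rcos: "H +>\<^bsub>PR\<^esub> a = {h + a | h. h \<in> H}"
  by (auto simp: a_r_coset_def r_coset_def)

lemma idl_add: "ideal I PR \<Longrightarrow> x \<in> I \<Longrightarrow> y \<in> I \<Longrightarrow> x + y \<in> I"
  using additive_subgroup.a_closed[of I PR] ideal.axioms(1) by fastforce
lemma idl_neg: "ideal I PR \<Longrightarrow> x \<in> I \<Longrightarrow> - x \<in> I"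
  using additive_subgroup.a_inv_closed[of I PR] ideal.axioms(1) by fastforce
lemma idl_diff: "ideal I PR \<Longrightarrow> x \<in> I \<Longrightarrow> y \<in> I \<Longrightarrow> x - y \<in> I"
  by (metis diff_conv_add_uminus idl_add idl_neg)
lemma idl_zero: "ideal I PR \<Longrightarrow> 0 \<in> I"
  using additive_subgroup.zero_closed[of I PR] ideal.axioms(1) by fastforce
lemma idl_multl: "ideal I PR \<Longrightarrow> x \<in> I \<Longrightarrow> y * x \<in> I"
  using ideal.I_l_closed[of I PR x y] by simp
lemma idl_multr: "ideal I PR \<Longrightarrow> x \<in> I \<Longrightarrow> x * y \<in> I"
  using idl_multl[of I x y] by (simp add: mult.commute)
lemma idl_sum: "ideal I PR \<Longrightarrow> (\<And>x. x \<in> S \<Longrightarrow> f x \<in> I) \<Longrightarrow> sum f S \<in> I"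
  by (induction S rule: infinite_finite_induct) (auto simp: idl_zero idl_add)

lemma idealPR_I:
  assumes "0 \<in> I" "\<And>x y. x \<in> I \<Longrightarrow> y \<in> I \<Longrightarrow> x + y \<in> I" "\<And>x. x \<in> I \<Longrightarrow> - x \<in> I"
    "\<And>x y. x \<in> I \<Longrightarrow> y * x \<in> I"
  shows "ideal I PR"
proof (rule idealI)
  show "ring PR" by (rule P.ring_axioms)
  show "subgroup I (add_monoid PR)"
    by (rule P.add.subgroupI) (use assms in auto)
  show "\<And>a x. a \<in> I \<Longrightarrow> x \<in> carrier PR \<Longrightarrow> x \<otimes>\<^bsub>PR\<^esub> a \<in> I" using assms by simp
  show "\<And>a x. a \<in> I \<Longrightarrow> x \<in> carrier PR \<Longrightarrow> a \<otimes>\<^bsub>PR\<^esub> x \<in> I" using assms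
    by (simp add: mult.commute)
qed

lemma genideal_PR: "ideal (genideal PR S) PR"
  by (rule P.genideal_ideal) simp
lemma genideal_PR_self: "x \<in> S \<Longrightarrow> x \<in> genideal PR S"
  using P.genideal_self[of S] by auto
lemma genideal_PR_min: "ideal I PR \<Longrightarrow> S \<subseteq> I \<Longrightarrow> genideal PR S \<subseteq> I"
  by (rule P.genideal_minimal)

lemma setsum_ideal: "ideal I PR \<Longrightarrow> ideal J PR \<Longrightarrow> ideal (setsum I J) PR"
proof (rule idealPR_I)
  assume I: "ideal I PR" and J: "ideal J PR"
  show "0 \<in> setsum I J" unfolding setsum_def using idl_zero[OF I] idl_zero[OF J] by force
  show "x + y \<in> setsum I J" if "x \<in> setsum I J" "y \<in> setsum I J" for x y
  proof -
    from that obtain a b c d where "x = a + b" "y = c + d" "a \<in> I" "b \<in> J" "c \<in> I" "d \<in> J"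
      unfolding setsum_def by blast
    then show ?thesis unfolding setsum_def
      by (intro CollectI exI[of _ "a+c"] exI[of _ "b+d"]) (auto simp: idl_add I J algebra_simps)
  qed
  show "- x \<in> setsum I J" if "x \<in> setsum I J" for x
  proof -
    from that obtain a b where "x = a + b" "a \<in> I" "b \<in> J"
      unfolding setsum_def by blast
    then show ?thesis unfolding setsum_def
      by (intro CollectI exI[of _ "-a"] exI[of _ "-b"]) (auto simp: idl_neg I J)
  qed
  show "y * x \<in> setsum I J" if "x \<in> setsum I J" for x y
  proof -
    from that obtain a b where "x = a + b" "a \<in> I" "b \<in> J"
      unfolding setsum_def by blast
    then show ?thesis unfolding setsum_def
      by (intro CollectI exI[of _ "y*a"] exI[of _ "y*b"]) (auto simp: idl_multl I J distrib_left)
  qed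
qed

lemma setsum_I: "a \<in> I \<Longrightarrow> b \<in> J \<Longrightarrow> a + b \<in> setsum I J"
  unfolding setsum_def by blast
lemma setsum_left: "ideal J PR \<Longrightarrow> a \<in> I \<Longrightarrow> a \<in> setsum I J"
  using setsum_I[of a I 0 J] idl_zero[of J] by simp
lemma setsum_right: "ideal I PR \<Longrightarrow> b \<in> J \<Longrightarrow> b \<in> setsum I J"
  using setsum_I[of 0 I b J] idl_zero[of I] by simp
lemma setsum_mono: "I \<subseteq> I' \<Longrightarrow> J \<subseteq> J' \<Longrightarrow> setsum I J \<subseteq> setsum I' J'"
  unfolding setsum_def by blast

lemma u_ideal: "ideal (u_mult B UNIV) PR"
proof (rule idealPR_I)
  show "0 \<in> u_mult B UNIV" unfolding u_mult_def by (auto intro!: exI[of _ "\<lambda>_. 0"])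
  show "x + y \<in> u_mult B UNIV" if "x \<in> u_mult B UNIV" "y \<in> u_mult B UNIV" for x y
  proof -
    from that obtain n n' where "x = (\<Sum>i\<in>UNIV. lin_form B i * n i)" "y = (\<Sum>i\<in>UNIV. lin_form B i * n' i)"
      unfolding u_mult_def by blast
    then show ?thesis unfolding u_mult_def
      by (auto intro!: exI[of _ "\<lambda>i. n i + n' i"] simp: sum.distrib algebra_simps)
  qed
  show "- x \<in> u_mult B UNIV" if "x \<in> u_mult B UNIV" for x
  proof -
    from that obtain n where "x = (\<Sum>i\<in>UNIV. lin_form B i * n i)"
      unfolding u_mult_def by blast
    then show ?thesis unfolding u_mult_def
      by (auto intro!: exI[of _ "\<lambda>i. - n i"] simp: sum_negf)
  qed
  show "y * x \<in> u_mult B UNIV" if "x \<in> u_mult B UNIV" for x y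
  proof -
    from that obtain n where "x = (\<Sum>i\<in>UNIV. lin_form B i * n i)"
      unfolding u_mult_def by blast
    then show ?thesis unfolding u_mult_def
      by (auto intro!: exI[of _ "\<lambda>i. y * n i"] simp: sum_distrib_left algebra_simps)
  qed
qed

lemma u_mult_mono: "u_mult B N \<subseteq> u_mult B UNIV"
  unfolding u_mult_def by blast

lemma rcos_eq_iff: "ideal I PR \<Longrightarrow> (I +>\<^bsub>PR\<^esub> a = I +>\<^bsub>PR\<^esub> b) \<longleftrightarrow> a - b \<in> I"
proof
  assume I: "ideal I PR" and e: "I +>\<^bsub>PR\<^esub> a = I +>\<^bsub>PR\<^esub> b"
  have "a \<in> I +>\<^bsub>PR\<^esub> a" using idl_zero[OF I] by (force simp: PR_rcos)
  then have "a \<in> I +>\<^bsub>PR\<^esub> b" using e by simp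
  then obtain h where "h \<in> I" "a = h + b" by (auto simp: PR_rcos)
  then show "a - b \<in> I" by simp
next
  assume I: "ideal I PR" and d: "a - b \<in> I"
  show "I +>\<^bsub>PR\<^esub> a = I +>\<^bsub>PR\<^esub> b"
  proof (auto simp: PR_rcos)
    fix h assume "h \<in> I"
    then show "\<exists>h'. h + a = h' + b \<and> h' \<in> I"
      by (intro exI[of _ "h + (a - b)"]) (simp add: idl_add[OF I] d)
  next
    fix h assume "h \<in> I"
    then show "\<exists>h'. h + b = h' + a \<and> h' \<in> I"
      by (intro exI[of _ "h - (a - b)"]) (simp add: idl_diff[OF I] d)
  qed
qed

lemma induced_rcos:
  assumes "ideal L PR" "T \<subseteq> L" "0 \<in> T"
  shows "induced L (T +>\<^bsub>PR\<^esub> a) = L +>\<^bsub>PR\<^esub> a"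
proof -
  have ex: "\<exists>p. p \<in> T +>\<^bsub>PR\<^esub> a" using assms(3) by (force simp: PR_rcos)
  define p where "p = (SOME p. p \<in> T +>\<^bsub>PR\<^esub> a)"
  have "p \<in> T +>\<^bsub>PR\<^esub> a" unfolding p_def using someI_ex[OF ex] .
  then obtain h where "h \<in> T" "p = h + a" by (auto simp: PR_rcos)
  then have "p - a \<in> L" using assms(2) by auto
  then show ?thesis unfolding induced_def p_def[symmetric] using rcos_eq_iff[OF assms(1)] by blast
qed

definition ind :: "'n set \<Rightarrow> 'n \<Rightarrow>\<^sub>0 nat" where
  "ind \<sigma> = (\<Sum>i\<in>\<sigma>. Poly_Mapping.single i 1)"

lemma lookup_ind: "Poly_Mapping.lookup (ind \<sigma>) i = (if i \<in> \<sigma> then 1 else 0)" for \<sigma> :: "'n::finite set"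
  unfolding ind_def by (simp add: lookup_sum lookup_single when_def)

lemma keys_ind[simp]: "Poly_Mapping.keys (ind \<sigma>) = \<sigma>" for \<sigma> :: "'n::finite set"
  by (auto simp: in_keys_iff lookup_ind split: if_splits)

lemma xs_single: "xs \<sigma> = Poly_Mapping.single (ind \<sigma>) (1::int)"
  for \<sigma> :: "'n::finite set"
proof -
  have "finite \<sigma>" by simp
  then show ?thesis unfolding xs_def ind_def
    by (induction \<sigma> rule: finite_induct) (simp_all add: var_def mult_single)
qed

lemma keys_xs: "Poly_Mapping.keys (xs \<sigma>) = {ind \<sigma>}" for \<sigma> :: "'n::finite set"
  by (simp add: xs_single)

lemma keys_nat_add: "Poly_Mapping.keys (a + b) = Poly_Mapping.keys a \<union> Poly_Mapping.keys b" for a b :: "'n \<Rightarrow>\<^sub>0 nat"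
  by (auto simp: in_keys_iff lookup_add)

definition NK :: "'n set set \<Rightarrow> 'n mpoly set" where
  "NK K = {p. \<forall>m\<in>Poly_Mapping.keys p. Poly_Mapping.keys m \<notin> K}"

lemma NK_ideal:
  assumes down: "\<And>\<sigma> \<tau>. \<sigma> \<in> K \<Longrightarrow> \<tau> \<subseteq> \<sigma> \<Longrightarrow> \<tau> \<in> K"
  shows "ideal (NK K) PR"
proof (rule idealPR_I)
  show "0 \<in> NK K" by (simp add: NK_def)
  show "x + y \<in> NK K" if "x \<in> NK K" "y \<in> NK K" for x y
    using that keys_add[of x y] unfolding NK_def by blast
  show "- x \<in> NK K" if "x \<in> NK K" for x
    using that unfolding NK_def by simp
  show "y * x \<in> NK K" if "x \<in> NK K" for x y
  proof (unfold NK_def, intro CollectI ballI)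
    fix m assume "m \<in> Poly_Mapping.keys (y * x)"
    then obtain a b where "m = a + b" "b \<in> Poly_Mapping.keys x" using keys_mult by blast
    then have "Poly_Mapping.keys b \<notin> K" "Poly_Mapping.keys b \<subseteq> Poly_Mapping.keys m" using that by (auto simp: NK_def keys_nat_add)
    then show "Poly_Mapping.keys m \<notin> K" using down by blast
  qed
qed

lemma SR_sub_NK:
  fixes K :: "'n::finite set set"
  assumes down: "\<And>\<sigma> \<tau>. \<sigma> \<in> K \<Longrightarrow> \<tau> \<subseteq> \<sigma> \<Longrightarrow> \<tau> \<in> K"
  shows "SR_ideal K \<subseteq> NK K"
  unfolding SR_ideal_def
  by (rule genideal_PR_min[OF NK_ideal[OF down]]) (auto simp: NK_def keys_xs keys_ind)

lemma poly_decomp: "p = (\<Sum>m\<in>Poly_Mapping.keys p. Poly_Mapping.single m (Poly_Mapping.lookup p m))"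
  for p :: "('a \<Rightarrow>\<^sub>0 nat) \<Rightarrow>\<^sub>0 int"
  by (rule poly_mapping_eqI) (simp add: lookup_sum lookup_single when_def in_keys_iff)

lemma NK_sub_SR:
  fixes K :: "'n::finite set set"
  shows "NK K \<subseteq> SR_ideal K"
proof
  fix p :: "'n mpoly" assume p: "p \<in> NK K"
  have I: "ideal (SR_ideal K) PR" unfolding SR_ideal_def by (rule genideal_PR)
  have "Poly_Mapping.single m c \<in> SR_ideal K" if "Poly_Mapping.keys m \<notin> K" for m c
  proof -
    define s where "s = ind (Poly_Mapping.keys m)"
    have "(m - s) + s = m"
      by (rule poly_mapping_eqI) (auto simp: lookup_add lookup_minus s_def lookup_ind in_keys_iff)
    then have "Poly_Mapping.single m c = Poly_Mapping.single (m - s) c * xs (Poly_Mapping.keys m)"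
      by (simp add: xs_single s_def[symmetric] mult_single)
    moreover have "xs (Poly_Mapping.keys m) \<in> SR_ideal K"
      unfolding SR_ideal_def by (rule genideal_PR_self) (use that in blast)
    ultimately show ?thesis using idl_multl[OF I] by simp
  qed
  then have "(\<Sum>m\<in>Poly_Mapping.keys p. Poly_Mapping.single m (Poly_Mapping.lookup p m)) \<in> SR_ideal K"
    using p by (intro idl_sum[OF I]) (auto simp: NK_def)
  then show "p \<in> SR_ideal K" using poly_decomp[of p] by simp
qed

lemma SR_inter:
  fixes K1 K2 :: "'n::finite set set"
  assumes "simplicial_complex K1" "simplicial_complex K2"
  shows "SR_ideal K1 \<inter> SR_ideal K2 \<subseteq> SR_ideal (K1 \<union> K2)"
proof -
  have "SR_ideal K1 \<inter> SR_ideal K2 \<subseteq> NK K1 \<inter> NK K2"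
    using SR_sub_NK[of K1] SR_sub_NK[of K2] assms unfolding simplicial_complex_def by blast
  also have "\<dots> \<subseteq> NK (K1 \<union> K2)" unfolding NK_def by blast
  also have "\<dots> \<subseteq> SR_ideal (K1 \<union> K2)" by (rule NK_sub_SR)
  finally show ?thesis .
qed

lemma antisym_sum: "(\<Sum>i\<in>(UNIV::'r::finite set). u i * (\<Sum>j\<in>UNIV. u j * (a j i - a i j))) = (0::'n mpoly)"
proof -
  have "(\<Sum>i\<in>(UNIV::'r set). u i * (\<Sum>j\<in>UNIV. u j * (a j i - a i j))) =
     (\<Sum>i\<in>UNIV. \<Sum>j\<in>UNIV. u i * u j * a j i) - (\<Sum>i\<in>UNIV. \<Sum>j\<in>UNIV. u i * u j * a i j)"
    by (simp add: sum_distrib_left algebra_simps sum_subtractf)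
  also have "(\<Sum>i\<in>(UNIV::'r set). \<Sum>j\<in>UNIV. u i * u j * a j i) = (\<Sum>i\<in>UNIV. \<Sum>j\<in>UNIV. u i * u j * a i j)"
    by (subst sum.swap) (simp add: ac_simps)
  finally show ?thesis by simp
qed

lemma tor_split:
  fixes B :: "int^'n::finite^'r::finite"
  assumes tor: "tor1_zero B UNIV IW" and sub: "IW \<subseteq> setsum I1 I2"
    and I1: "ideal I1 PR" and I2: "ideal I2 PR"
    and xU: "x \<in> u_mult B UNIV" and xW: "x \<in> IW"
  shows "\<exists>y1 y2. y1 \<in> I1 \<and> y1 \<in> u_mult B UNIV \<and> y2 \<in> I2 \<and> y2 \<in> u_mult B UNIV \<and> x = y1 + y2"
proof -
  obtain m where xm: "x = (\<Sum>i\<in>UNIV. lin_form B i * m i)" using xU unfolding u_mult_def by blast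
  obtain a where a: "\<And>i. m i - (\<Sum>j\<in>UNIV. lin_form B j * (a j i - a i j)) \<in> IW"
    using tor xW xm unfolding tor1_zero_def by blast
  define e where "e i = m i - (\<Sum>j\<in>UNIV. lin_form B j * (a j i - a i j))" for i
  have "\<forall>i. \<exists>f g. f \<in> I1 \<and> g \<in> I2 \<and> e i = f + g"
    using a sub unfolding e_def setsum_def by blast
  then obtain f g where fg: "\<And>i. f i \<in> I1" "\<And>i. g i \<in> I2" "\<And>i. e i = f i + g i"
    by metis
  have "x = (\<Sum>i\<in>UNIV. lin_form B i * e i) + (\<Sum>i\<in>UNIV. lin_form B i * (\<Sum>j\<in>UNIV. lin_form B j * (a j i - a i j)))"
    unfolding xm e_def by (simp add: algebra_simps sum.distrib[symmetric])
  also have "(\<Sum>i\<in>UNIV. lin_form B i * (\<Sum>j\<in>UNIV. lin_form B j * (a j i - a i j))) = 0"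
    by (rule antisym_sum)
  finally have "x = (\<Sum>i\<in>UNIV. lin_form B i * f i) + (\<Sum>i\<in>UNIV. lin_form B i * g i)"
    by (simp add: fg algebra_simps sum.distrib)
  moreover have "(\<Sum>i\<in>UNIV. lin_form B i * f i) \<in> I1"
    by (rule idl_sum[OF I1]) (simp add: idl_multl[OF I1] fg)
  moreover have "(\<Sum>i\<in>UNIV. lin_form B i * g i) \<in> I2"
    by (rule idl_sum[OF I2]) (simp add: idl_multl[OF I2] fg)
  moreover have "(\<Sum>i\<in>UNIV. lin_form B i * f i) \<in> u_mult B UNIV"
    "(\<Sum>i\<in>UNIV. lin_form B i * g i) \<in> u_mult B UNIV" unfolding u_mult_def by blast+
  ultimately show ?thesis by blast
qed

lemma kernel_char:
  fixes B :: "int^'n::finite^'r::finite"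
  defines "U \<equiv> u_mult B UNIV"
  assumes I1: "ideal I1 PR" and I2: "ideal I2 PR" and IK: "ideal IK PR"
    and inter: "I1 \<inter> I2 \<subseteq> IK" and W1: "I1 \<subseteq> IW" and W2: "I2 \<subseteq> IW" and IW: "ideal IW PR"
    and sub: "IW \<subseteq> setsum I1 I2" and tor: "tor1_zero B UNIV IW"
  shows "(\<exists>n\<in>IK. p - n \<in> setsum I1 U \<and> p - n \<in> setsum I2 U) \<longleftrightarrow> p \<in> setsum IK U"
proof
  have U: "ideal U PR" unfolding U_def by (rule u_ideal)
  assume "\<exists>n\<in>IK. p - n \<in> setsum I1 U \<and> p - n \<in> setsum I2 U"
  then obtain n i1 u1 i2 u2 where n: "n \<in> IK" and w1: "p - n = i1 + u1" "i1 \<in> I1" "u1 \<in> U"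
    and w2: "p - n = i2 + u2" "i2 \<in> I2" "u2 \<in> U"
    unfolding setsum_def by blast
  have e: "i1 + u1 = i2 + u2" using w1(1) w2(1) by simp
  have "i1 - i2 = (i1 + u1) - u1 - i2" by simp
  also have "\<dots> = (i2 + u2) - u1 - i2" using e by simp
  also have "\<dots> = u2 - u1" by simp
  finally have d: "i1 - i2 = u2 - u1" .
  have "i1 - i2 \<in> U" unfolding d using idl_diff[OF U] w1(3) w2(3) by blast
  moreover have "i1 - i2 \<in> IW" using W1 W2 w1(2) w2(2) idl_diff[OF IW] by blast
  ultimately obtain y1 y2 where y: "y1 \<in> I1" "y1 \<in> U" "y2 \<in> I2" "y2 \<in> U" "i1 - i2 = y1 + y2"
    using tor_split[OF tor sub I1 I2] unfolding U_def by blast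
  have "i1 - y1 \<in> I1" using y w1 idl_diff[OF I1] by blast
  moreover have "i1 - y1 = i2 + y2" using y by (simp add: algebra_simps)
  moreover have "i2 + y2 \<in> I2" using y w2 idl_add[OF I2] by blast
  ultimately have z: "i1 - y1 \<in> IK" using inter by auto
  have "p = (n + (i1 - y1)) + (y1 + u1)" using w1 by (simp add: algebra_simps)
  moreover have "n + (i1 - y1) \<in> IK" using idl_add[OF IK n z] .
  moreover have "y1 + u1 \<in> U" using idl_add[OF U] y w1 by blast
  ultimately show "p \<in> setsum IK U" using setsum_I by metis
next
  have U: "ideal U PR" unfolding U_def by (rule u_ideal)
  assume "p \<in> setsum IK U"
  then obtain k u where "p = k + u" "k \<in> IK" "u \<in> U" unfolding setsum_def by blast
  then show "\<exists>n\<in>IK. p - n \<in> setsum I1 U \<and> p - n \<in> setsum I2 U"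
    by (intro bexI[of _ k]) (auto intro!: setsum_right I1 I2)
qed

lemma SR_mono: "K \<subseteq> K' \<Longrightarrow> SR_ideal K' \<subseteq> SR_ideal K"
  for K K' :: "'m set set"
  unfolding SR_ideal_def
  by (rule genideal_PR_min[OF genideal_PR]) (auto intro: genideal_PR_self)

context
  fixes K1 K2 :: "'n::finite set set" and Z :: "'n set set"
  assumes ZW: "Z \<subseteq> K1 \<inter> K2"
begin

lemma SR_W_sub: "SR_ideal (K1 \<inter> K2) \<subseteq> setsum (SR_ideal K1) (SR_ideal K2)"
proof -
  have I: "ideal (setsum (SR_ideal K1) (SR_ideal K2)) PR"
    by (intro setsum_ideal; simp add: SR_ideal_def genideal_PR)
  have "{xs \<sigma> |\<sigma>. \<sigma> \<notin> K1 \<inter> K2} \<subseteq> setsum (SR_ideal K1) (SR_ideal K2)"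
  proof (rule subsetI)
    fix x assume "x \<in> {xs \<sigma> |\<sigma>. \<sigma> \<notin> K1 \<inter> K2}"
    then obtain \<sigma> where x: "x = xs \<sigma>" and s: "\<sigma> \<notin> K1 \<or> \<sigma> \<notin> K2" by blast
    have g1: "\<sigma> \<notin> K1 \<Longrightarrow> xs \<sigma> \<in> SR_ideal K1" unfolding SR_ideal_def by (rule genideal_PR_self) blast
    have g2: "\<sigma> \<notin> K2 \<Longrightarrow> xs \<sigma> \<in> SR_ideal K2" unfolding SR_ideal_def by (rule genideal_PR_self) blast
    have i1: "ideal (SR_ideal K1) PR" "ideal (SR_ideal K2) PR" by (simp_all add: SR_ideal_def genideal_PR)
    show "x \<in> setsum (SR_ideal K1) (SR_ideal K2)"
      using s g1 g2 setsum_left[OF i1(2)] setsum_right[OF i1(1)] x by blast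
  qed
  then show ?thesis unfolding SR_ideal_def[of "K1 \<inter> K2"] by (rule genideal_PR_min[OF I])
qed

lemma xs_union: "\<tau> \<subseteq> \<sigma> \<Longrightarrow> xs \<sigma> = xs (\<sigma> - \<tau>) * xs \<tau>" for \<sigma> \<tau> :: "'n set"
proof -
  assume "\<tau> \<subseteq> \<sigma>"
  then have "\<sigma> = (\<sigma> - \<tau>) \<union> \<tau>" by blast
  then have "xs \<sigma> = xs ((\<sigma> - \<tau>) \<union> \<tau>)" by simp
  also have "\<dots> = xs (\<sigma> - \<tau>) * xs \<tau>" unfolding xs_def by (rule prod.union_disjoint) auto
  finally show ?thesis .
qed

lemma SR_K_eq: "SR_ideal (Del Z (K1 \<union> K2)) = setsum (face_ideal Z) (SR_ideal (K1 \<union> K2))"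
proof
  show "SR_ideal (Del Z (K1 \<union> K2)) \<subseteq> setsum (face_ideal Z) (SR_ideal (K1 \<union> K2))"
    unfolding SR_ideal_def[of "Del Z (K1 \<union> K2)"]
  proof (rule genideal_PR_min, (intro setsum_ideal; simp add: SR_ideal_def face_ideal_def genideal_PR), safe)
    fix \<sigma> assume "\<sigma> \<notin> Del Z (K1 \<union> K2)"
    then consider "\<sigma> \<notin> K1 \<union> K2" | \<tau> where "\<tau> \<in> Z" "\<tau> \<subseteq> \<sigma>"
      unfolding Del_def open_star_def by blast
    then show "xs \<sigma> \<in> setsum (face_ideal Z) (SR_ideal (K1 \<union> K2))"
    proof cases
      case 1
      then show ?thesis unfolding SR_ideal_def face_ideal_def
        by (intro setsum_right genideal_PR genideal_PR_self) blast
    next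
      case (2 \<tau>)
      have "xs \<tau> \<in> face_ideal Z" unfolding face_ideal_def
        by (rule genideal_PR_self) (use 2 in blast)
      then have "xs (\<sigma> - \<tau>) * xs \<tau> \<in> face_ideal Z"
        unfolding face_ideal_def by (rule idl_multl[OF genideal_PR])
      then show ?thesis using xs_union[OF 2(2)] unfolding SR_ideal_def
        by (simp add: setsum_left genideal_PR)
    qed
  qed
next
  have IK: "ideal (SR_ideal (Del Z (K1 \<union> K2))) PR" unfolding SR_ideal_def by (rule genideal_PR)
  have "face_ideal Z \<subseteq> SR_ideal (Del Z (K1 \<union> K2))"
    unfolding face_ideal_def
  proof (rule genideal_PR_min[OF IK], safe)
    fix \<tau> assume "\<tau> \<in> Z"
    then have "\<tau> \<notin> Del Z (K1 \<union> K2)" using ZW unfolding Del_def open_star_def by blast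
    then show "xs \<tau> \<in> SR_ideal (Del Z (K1 \<union> K2))" unfolding SR_ideal_def
      by (intro genideal_PR_self) blast
  qed
  moreover have "SR_ideal (K1 \<union> K2) \<subseteq> SR_ideal (Del Z (K1 \<union> K2))"
    by (rule SR_mono) (auto simp: Del_def)
  ultimately show "setsum (face_ideal Z) (SR_ideal (K1 \<union> K2)) \<subseteq> SR_ideal (Del Z (K1 \<union> K2))"
    using idl_add[OF IK] unfolding setsum_def by blast
qed
end

lemma carrier_Quot_PR: "carrier (PR Quot T) = {T +>\<^bsub>PR\<^esub> p | p. True}"
  by (auto simp: FactRing_def A_RCOSETS_def RCOSETS_def a_r_coset_def)

lemma Quot_PR_mult: "ideal T PR \<Longrightarrow> (T +>\<^bsub>PR\<^esub> p) \<otimes>\<^bsub>PR Quot T\<^esub> (T +>\<^bsub>PR\<^esub> q) = T +>\<^bsub>PR\<^esub> (p * q)"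
  using ring_hom_mult[OF ideal.rcos_ring_hom, of T PR p q] by simp
lemma Quot_PR_add: "ideal T PR \<Longrightarrow> (T +>\<^bsub>PR\<^esub> p) \<oplus>\<^bsub>PR Quot T\<^esub> (T +>\<^bsub>PR\<^esub> q) = T +>\<^bsub>PR\<^esub> (p + q)"
  using ring_hom_add[OF ideal.rcos_ring_hom, of T PR p q] by simp
lemma Quot_PR_one: "\<one>\<^bsub>PR Quot T\<^esub> = T +>\<^bsub>PR\<^esub> 1"
  by (simp add: FactRing_def)
lemma Quot_PR_zero: "\<zero>\<^bsub>PR Quot T\<^esub> = T"
  by (simp add: FactRing_def)
lemma rcos_zero_PR: "T +>\<^bsub>PR\<^esub> 0 = T"
  by (simp add: PR_rcos)

lemma fp_simps:
  "carrier (fiber_prod A B C eA eB) = {(a, b). a \<in> carrier A \<and> b \<in> carrier B \<and> eA a = eB b}"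
  "(a, b) \<otimes>\<^bsub>fiber_prod A B C eA eB\<^esub> (a', b') = (a \<otimes>\<^bsub>A\<^esub> a', b \<otimes>\<^bsub>B\<^esub> b')"
  "(a, b) \<oplus>\<^bsub>fiber_prod A B C eA eB\<^esub> (a', b') = (a \<oplus>\<^bsub>A\<^esub> a', b \<oplus>\<^bsub>B\<^esub> b')"
  "\<one>\<^bsub>fiber_prod A B C eA eB\<^esub> = (\<one>\<^bsub>A\<^esub>, \<one>\<^bsub>B\<^esub>)"
  "\<zero>\<^bsub>fiber_prod A B C eA eB\<^esub> = (\<zero>\<^bsub>A\<^esub>, \<zero>\<^bsub>B\<^esub>)"
  by (simp_all add: fiber_prod_def)

theorem lemma4p10:
  fixes K1 K2 :: "('n::finite) set set"
    and Z :: "'n set set"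
    and B :: "int^'n^('r::finite)"
  defines "W \<equiv> K1 \<inter> K2"
    and "K \<equiv> Del Z (K1 \<union> K2)"
  assumes "simplicial_complex K1" and "simplicial_complex K2"
    and "Z \<subseteq> W" and "{} \<notin> Z"
    and "open_star (K1 \<union> K2) Z \<subseteq> W"
    and "rank (\<chi> i j. real_of_int (B $ i $ j)) = CARD('r)"
    and "tor1_zero B UNIV (SR_ideal K1)"
    and "tor1_zero B UNIV (SR_ideal K2)"
    and "tor1_zero B UNIV (SR_ideal K)"
    and "tor1_zero B UNIV (SR_ideal W)"
  shows "tor0_ring B (SR_ideal K) \<simeq>
           conn_sum (tor0_ring B (SR_ideal K1)) (tor0_ring B (SR_ideal K2)) (tor0_ring B (SR_ideal W))
             (induced (tor0_sub B UNIV (SR_ideal W))) (induced (tor0_sub B UNIV (SR_ideal W)))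
             (tor0_set B (setsum (face_ideal Z) (SR_ideal (K1 \<union> K2))) (SR_ideal (K1 \<union> K2)))
             (induced (tor0_sub B UNIV (SR_ideal K1))) (induced (tor0_sub B UNIV (SR_ideal K2)))"
proof -
  note sc1 = assms(3) and sc2 = assms(4) and ZW = assms(5) and torW = assms(12)
  have ZW': "Z \<subseteq> K1 \<inter> K2" using ZW unfolding W_def .
  define U where "U = u_mult B UNIV"
  define I1 where "I1 = SR_ideal K1"
  define I2 where "I2 = SR_ideal K2"
  define IW where "IW = SR_ideal W"
  define IU where "IU = SR_ideal (K1 \<union> K2)"
  define IK where "IK = SR_ideal K"
  define T1 where "T1 = setsum I1 U"
  define T2 where "T2 = setsum I2 U"
  define TW where "TW = setsum IW U"
  define TK where "TK = setsum IK U"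
  have tsub: "tor0_sub B UNIV I = setsum I U" for I unfolding tor0_sub_def U_def ..
  have iU: "ideal U PR" unfolding U_def by (rule u_ideal)
  have iSR: "ideal (SR_ideal L) PR" for L :: "'n set set" unfolding SR_ideal_def by (rule genideal_PR)
  have iI1: "ideal I1 PR" and iI2: "ideal I2 PR" and iIW: "ideal IW PR" and iIU: "ideal IU PR"
    and iIK: "ideal IK PR" unfolding I1_def I2_def IW_def IU_def IK_def by (rule iSR)+
  have iT1: "ideal T1 PR" and iT2: "ideal T2 PR" and iTW: "ideal TW PR" and iTK: "ideal TK PR"
    unfolding T1_def T2_def TW_def TK_def using setsum_ideal iU iI1 iI2 iIW iIK by blast+
  have IK_eq: "IK = setsum (face_ideal Z) IU"
    unfolding IK_def IU_def K_def using SR_K_eq[of Z K1 K2] ZW W_def by blast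
  have IU1: "IU \<subseteq> I1" and IU2: "IU \<subseteq> I2" unfolding IU_def I1_def I2_def
    by (rule SR_mono; blast)+
  have I1W: "I1 \<subseteq> IW" and I2W: "I2 \<subseteq> IW" unfolding IW_def I1_def I2_def W_def
    by (rule SR_mono; blast)+
  have IUK: "IU \<subseteq> IK" unfolding IU_def IK_def K_def by (rule SR_mono) (auto simp: Del_def)
  have Wsub: "IW \<subseteq> setsum I1 I2" unfolding IW_def I1_def I2_def W_def by (rule SR_W_sub[OF ZW'])
  have inter: "I1 \<inter> I2 \<subseteq> IK" using SR_inter[OF sc1 sc2] IUK unfolding I1_def I2_def IU_def by blast
  have T1W: "T1 \<subseteq> TW" and T2W: "T2 \<subseteq> TW" unfolding T1_def T2_def TW_def
    using setsum_mono I1W I2W by blast+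
  have z1: "0 \<in> T1" and z2: "0 \<in> T2" using idl_zero iT1 iT2 by blast+

  define A1 where "A1 = PR Quot T1"
  define A2 where "A2 = PR Quot T2"
  define C where "C = PR Quot TW"
  define eW where "eW = induced TW"
  define FP where "FP = fiber_prod A1 A2 C eW eW"
  define Psi where "Psi p = (T1 +>\<^bsub>PR\<^esub> p, T2 +>\<^bsub>PR\<^esub> p)" for p
  have eW1: "eW (T1 +>\<^bsub>PR\<^esub> p) = TW +>\<^bsub>PR\<^esub> p" for p
    unfolding eW_def by (rule induced_rcos[OF iTW T1W z1])
  have eW2: "eW (T2 +>\<^bsub>PR\<^esub> p) = TW +>\<^bsub>PR\<^esub> p" for p
    unfolding eW_def by (rule induced_rcos[OF iTW T2W z2])
  have cA1: "carrier A1 = {T1 +>\<^bsub>PR\<^esub> p | p. True}" unfolding A1_def by (rule carrier_Quot_PR)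
  have cA2: "carrier A2 = {T2 +>\<^bsub>PR\<^esub> p | p. True}" unfolding A2_def by (rule carrier_Quot_PR)
  have Psi_car: "Psi p \<in> carrier FP" for p
    unfolding FP_def fp_simps Psi_def using cA1 cA2 eW1 eW2 by auto
  have Psi_hom: "Psi \<in> ring_hom PR FP"
  proof (rule ring_hom_memI)
    show "Psi x \<in> carrier FP" for x by (rule Psi_car)
    show "Psi (x \<otimes>\<^bsub>PR\<^esub> y) = Psi x \<otimes>\<^bsub>FP\<^esub> Psi y" for x y
      unfolding FP_def Psi_def fp_simps A1_def A2_def by (simp add: Quot_PR_mult iT1 iT2)
    show "Psi (x \<oplus>\<^bsub>PR\<^esub> y) = Psi x \<oplus>\<^bsub>FP\<^esub> Psi y" for x y
      unfolding FP_def Psi_def fp_simps A1_def A2_def by (simp add: Quot_PR_add iT1 iT2)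
    show "Psi \<one>\<^bsub>PR\<^esub> = \<one>\<^bsub>FP\<^esub>"
      unfolding FP_def Psi_def fp_simps A1_def A2_def Quot_PR_one by simp
  qed
  have Psi_surj: "Psi ` carrier PR = carrier FP"
  proof
    show "Psi ` carrier PR \<subseteq> carrier FP" using Psi_car by auto
    show "carrier FP \<subseteq> Psi ` carrier PR"
    proof
      fix x assume "x \<in> carrier FP"
      then obtain a b where x: "x = (T1 +>\<^bsub>PR\<^esub> a, T2 +>\<^bsub>PR\<^esub> b)"
        and e: "eW (T1 +>\<^bsub>PR\<^esub> a) = eW (T2 +>\<^bsub>PR\<^esub> b)"
        unfolding FP_def fp_simps cA1 cA2 by auto
      then have "a - b \<in> TW" using eW1 eW2 rcos_eq_iff[OF iTW] by simp
      then obtain w u where "a - b = w + u" "w \<in> IW" "u \<in> U" unfolding TW_def setsum_def by blast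
      moreover then obtain i1 i2 where "w = i1 + i2" "i1 \<in> I1" "i2 \<in> I2"
        using Wsub unfolding setsum_def by blast
      ultimately have d: "a - b = i1 + i2 + u" "i1 \<in> I1" "i2 \<in> I2" "u \<in> U" by auto
      define p where "p = b + i2"
      have "p - a = - (i1 + u)" using d(1) unfolding p_def by (simp add: algebra_simps)
      moreover have "- (i1 + u) \<in> T1" unfolding T1_def
        using d setsum_I[of i1 I1 u U] idl_neg[OF setsum_ideal[OF iI1 iU]] by blast
      ultimately have "T1 +>\<^bsub>PR\<^esub> p = T1 +>\<^bsub>PR\<^esub> a" using rcos_eq_iff[OF iT1] by simp
      moreover have "T2 +>\<^bsub>PR\<^esub> p = T2 +>\<^bsub>PR\<^esub> b" using rcos_eq_iff[OF iT2] d(3)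
        setsum_left[OF iU, of i2 I2] unfolding p_def T2_def by simp
      ultimately show "x \<in> Psi ` carrier PR" unfolding x Psi_def by auto
    qed
  qed
  have ringFP: "ring FP"
  proof -
    have "ring (FP\<lparr>carrier := Psi ` carrier PR, zero := Psi \<zero>\<^bsub>PR\<^esub>\<rparr>)"
      by (rule P.ring_hom_imp_img_ring[OF Psi_hom])
    moreover have "Psi \<zero>\<^bsub>PR\<^esub> = \<zero>\<^bsub>FP\<^esub>"
      unfolding Psi_def FP_def fp_simps A1_def A2_def Quot_PR_zero by (simp add: rcos_zero_PR)
    ultimately show ?thesis using Psi_surj by simp
  qed
  interpret F: ring FP by (rule ringFP)
  interpret H: ring_hom_ring PR FP Psi by (rule ring_hom_ringI2[OF P.ring_axioms ringFP Psi_hom])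

  define Vs where "Vs = tor0_set B (setsum (face_ideal Z) IU) IU"
  define Vimg where "Vimg = {(induced T1 v, induced T2 v) | v. v \<in> Vs}"
  have Vimg_eq: "Vimg = Psi ` IK"
  proof -
    have s0: "tor0_sub B IK IU \<subseteq> T1" "tor0_sub B IK IU \<subseteq> T2"
      unfolding tor0_sub_def T1_def T2_def U_def using setsum_mono[OF IU1 u_mult_mono]
        setsum_mono[OF IU2 u_mult_mono] by blast+
    have "0 \<in> u_mult B IK" unfolding u_mult_def using idl_zero[OF iIK]
      by (auto intro!: exI[of _ "\<lambda>_. 0"])
    then have s1: "0 \<in> tor0_sub B IK IU"
      unfolding tor0_sub_def using setsum_I[of 0 IU 0] idl_zero[OF iIU] by fastforce
    have "induced T1 (tor0_sub B IK IU +>\<^bsub>PR\<^esub> n) = T1 +>\<^bsub>PR\<^esub> n"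
      "induced T2 (tor0_sub B IK IU +>\<^bsub>PR\<^esub> n) = T2 +>\<^bsub>PR\<^esub> n" for n
      using induced_rcos[OF iT1 s0(1) s1] induced_rcos[OF iT2 s0(2) s1] by auto
    then show ?thesis
      unfolding Vimg_def Vs_def tor0_set_def IK_eq[symmetric] Psi_def
      apply auto
      apply (rule_tac x="tor0_sub B IK IU +>\<^bsub>PR\<^esub> p" in exI)
      by auto
  qed
  have Vimg_ideal: "ideal Vimg FP"
  proof (rule idealI[OF ringFP])
    show "subgroup Vimg (add_monoid FP)"
    proof (rule F.add.subgroupI)
      show "Vimg \<subseteq> carrier FP" unfolding Vimg_eq using Psi_car by auto
      show "Vimg \<noteq> {}" unfolding Vimg_eq using idl_zero[OF iIK] by blast
      show "\<ominus>\<^bsub>FP\<^esub> a \<in> Vimg" if hyp: "a \<in> Vimg" for a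
      proof -
        obtain n where "n \<in> IK" "a = Psi n" using hyp unfolding Vimg_eq by blast
        then have "\<ominus>\<^bsub>FP\<^esub> a = Psi (- n)"
          using H.hom_a_inv[of n] by simp
        then show ?thesis unfolding Vimg_eq using idl_neg[OF iIK] \<open>n \<in> IK\<close> by auto
      qed
      show "a \<oplus>\<^bsub>FP\<^esub> b \<in> Vimg" if hyp: "a \<in> Vimg" "b \<in> Vimg" for a b
      proof -
        obtain n m where "n \<in> IK" "a = Psi n" "m \<in> IK" "b = Psi m" using hyp unfolding Vimg_eq by blast
        then have "a \<oplus>\<^bsub>FP\<^esub> b = Psi (n + m)" using H.hom_add[of n m] by simp
        then show ?thesis unfolding Vimg_eq using idl_add[OF iIK] \<open>n \<in> IK\<close> \<open>m \<in> IK\<close> by auto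
      qed
    qed
    show "x \<otimes>\<^bsub>FP\<^esub> a \<in> Vimg" if hyp: "a \<in> Vimg" "x \<in> carrier FP" for a x
    proof -
      obtain n where "n \<in> IK" "a = Psi n" using hyp unfolding Vimg_eq by blast
      moreover obtain q where "x = Psi q" using hyp Psi_surj by auto
      ultimately have "x \<otimes>\<^bsub>FP\<^esub> a = Psi (q * n)" using H.hom_mult[of q n] by simp
      then show ?thesis unfolding Vimg_eq using idl_multl[OF iIK] \<open>n \<in> IK\<close> by auto
    qed
    show "a \<otimes>\<^bsub>FP\<^esub> x \<in> Vimg" if hyp: "a \<in> Vimg" "x \<in> carrier FP" for a x
    proof -
      obtain n where "n \<in> IK" "a = Psi n" using hyp unfolding Vimg_eq by blast
      moreover obtain q where "x = Psi q" using hyp Psi_surj by auto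
      ultimately have "a \<otimes>\<^bsub>FP\<^esub> x = Psi (n * q)" using H.hom_mult[of n q] by simp
      then show ?thesis unfolding Vimg_eq using idl_multr[OF iIK] \<open>n \<in> IK\<close> by auto
    qed
  qed
  define CS where "CS = FP Quot Vimg"
  have CS_eq: "CS = conn_sum (tor0_ring B (SR_ideal K1)) (tor0_ring B (SR_ideal K2)) (tor0_ring B (SR_ideal W))
             (induced (tor0_sub B UNIV (SR_ideal W))) (induced (tor0_sub B UNIV (SR_ideal W)))
             (tor0_set B (setsum (face_ideal Z) (SR_ideal (K1 \<union> K2))) (SR_ideal (K1 \<union> K2)))
             (induced (tor0_sub B UNIV (SR_ideal K1))) (induced (tor0_sub B UNIV (SR_ideal K2)))"
    unfolding CS_def conn_sum_def FP_def Vimg_def Vs_def A1_def A2_def C_def eW_def tor0_ring_def tsub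
      T1_def T2_def TW_def I1_def I2_def IW_def IU_def ..
  define Phi where "Phi = (\<lambda>x. Vimg +>\<^bsub>FP\<^esub> x) \<circ> Psi"
  have ringCS: "ring CS" unfolding CS_def by (rule ideal.quotient_is_ring[OF Vimg_ideal])
  have Phi_hom: "Phi \<in> ring_hom PR CS"
    unfolding Phi_def CS_def by (rule ring_hom_trans[OF Psi_hom ideal.rcos_ring_hom[OF Vimg_ideal]])
  interpret G: ring_hom_ring PR CS Phi by (rule ring_hom_ringI2[OF P.ring_axioms ringCS Phi_hom])
  have Phi_surj: "Phi ` carrier PR = carrier CS"
  proof -
    have "carrier CS = (\<lambda>x. Vimg +>\<^bsub>FP\<^esub> x) ` carrier FP"
      unfolding CS_def by (auto simp: FactRing_def A_RCOSETS_def RCOSETS_def a_r_coset_def)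
    then show ?thesis unfolding Phi_def using Psi_surj by (simp add: image_comp[symmetric, unfolded comp_def] image_image)
  qed
  have ker: "a_kernel PR CS Phi = TK"
  proof -
    have "Phi p = \<zero>\<^bsub>CS\<^esub> \<longleftrightarrow> Psi p \<in> Vimg" for p
    proof -
      have "Phi p = \<zero>\<^bsub>CS\<^esub> \<longleftrightarrow> Vimg +>\<^bsub>FP\<^esub> Psi p = Vimg"
        unfolding Phi_def CS_def by (simp add: FactRing_def)
      also have "\<dots> \<longleftrightarrow> Psi p \<in> Vimg"
        using ideal.rcos_const_imp_mem[OF Vimg_ideal] F.a_rcos_zero[OF Vimg_ideal] Psi_car by blast
      finally show ?thesis .
    qed
    moreover have "Psi p \<in> Vimg \<longleftrightarrow> (\<exists>n\<in>IK. p - n \<in> T1 \<and> p - n \<in> T2)" for p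
    proof -
      have "Psi p = Psi n \<longleftrightarrow> p - n \<in> T1 \<and> p - n \<in> T2" for n
        unfolding Psi_def using rcos_eq_iff[OF iT1] rcos_eq_iff[OF iT2] by simp
      then show ?thesis unfolding Vimg_eq by auto
    qed
    moreover have "(\<exists>n\<in>IK. p - n \<in> T1 \<and> p - n \<in> T2) \<longleftrightarrow> p \<in> TK" for p
      unfolding T1_def T2_def TK_def U_def
      by (rule kernel_char[OF iI1 iI2 iIK inter I1W I2W iIW Wsub torW[folded IW_def]])
    ultimately show ?thesis unfolding a_kernel_def' by auto
  qed
  have "PR Quot (a_kernel PR CS Phi) \<simeq> CS" by (rule G.FactRing_iso[OF Phi_surj])
  then have "PR Quot TK \<simeq> CS" unfolding ker .
  then show ?thesis unfolding CS_eq TK_def IK_def U_def tor0_ring_def tsub .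
qed

end
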